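(* Let $m\ge2$, $n\ge1$, $f_i:\mathbb{R}^n\to\mathbb{R}$ smooth, $F(\boldsymbol\theta)=\sum_{i=1}^mf_i(\boldsymbol\theta_i)$, $\mathbf{r}\in\mathbb{R}^n$. Let $\alpha>0$, let $\boldsymbol\theta^0\in\mathbb{R}^{mn}$ satisfy $(\mathbf{1}_m^\top\otimes\mathbf{I}_n)\boldsymbol\theta^0=\mathbf{r}$, let $\{\mathbf{n}^k\}\subset\mathbb{R}^{mn}$ be any noise sequence, and let $\Psi_{\boldsymbol\theta^0}(\mathbf{x})=F(\boldsymbol\theta^0+\sqrt{\hat{\mathbf{L}}}\mathbf{x})$. Then the sequence generated by $\boldsymbol\theta^{k+1}=\boldsymbol\theta^k-\alpha(\hat{\mathbf{L}}\nabla F(\boldsymbol\theta^k)+\sqrt{\hat{\mathbf{L}}}\mathbf{n}^k)$ from $\boldsymbol\theta^0$ coincides with the sequence generated by $$\mathbf{x}^{k+1}=\mathbf{x}^k-\alpha(\nabla\Psi_{\boldsymbol\theta^0}(\mathbf{x}^k)+\mathbf{n}^k),\qquad\boldsymbol\theta^{k+1}=\boldsymbol\theta^0+\sqrt{\hat{\mathbf{L}}}\mathbf{x}^{k+1},$$ from $\mathbf{x}^0=\mathbf{0}$ and the same $\boldsymbol\theta^0$, with the same perturbations $\{\mathbf{n}^k\}$ and step-size $\alpha$.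
   Context: $\boldsymbol\theta=[\boldsymbol\theta_1^\top,\dots,\boldsymbol\theta_m^\top]^\top\in\mathbb{R}^{mn}$, $\nabla F$ the stacked gradient. $\mathbf{L}$ is the Laplacian of an undirected graph on $\{1,\dots,m\}$; $\sqrt{\mathbf{L}}$ its unique symmetric positive semidefinite square root; $\hat{\mathbf{L}}=\mathbf{L}\otimes\mathbf{I}_n$, $\sqrt{\hat{\mathbf{L}}}=\sqrt{\mathbf{L}}\otimes\mathbf{I}_n$. *)

theory Defs
  imports "HOL-Analysis.Analysis"
begin

text \<open>Stacked vectors in R^(mn) are modelled as real^'n^'m: block i is theta $ i in R^n.\<close>

definition laplacian :: "('m::finite \<Rightarrow> 'm \<Rightarrow> bool) \<Rightarrow> real^'m^'m" where
  "laplacian E = (\<chi> i j. if i = j then real (card {k. E i k}) else if E i j then -1 else 0)"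

text \<open>Action of the Kronecker product A (x) I_n on a stacked vector.\<close>
definition kron_apply :: "real^'m^'m \<Rightarrow> real^'n^'m \<Rightarrow> real^'n^'m" where
  "kron_apply A v = (\<chi> i. \<Sum>j\<in>UNIV. (A $ i $ j) *\<^sub>R (v $ j))"

text \<open>Action of 1_m^T (x) I_n.\<close>
definition block_sum :: "real^'n^'m \<Rightarrow> real^'n" where
  "block_sum v = (\<Sum>i\<in>UNIV. v $ i)"

definition is_psd_sqrt :: "real^'m^'m \<Rightarrow> real^'m^'m \<Rightarrow> bool" where
  "is_psd_sqrt S L \<longleftrightarrow> transpose S = S \<and> (\<forall>v. 0 \<le> v \<bullet> (S *v v)) \<and> S ** S = L"

definition grad :: "(real^'n \<Rightarrow> real) \<Rightarrow> real^'n \<Rightarrow> real^'n" where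
  "grad g x = (\<chi> j. frechet_derivative g (at x) (axis j 1))"

definition grad_stack :: "(real^'n^'m \<Rightarrow> real) \<Rightarrow> real^'n^'m \<Rightarrow> real^'n^'m" where
  "grad_stack g x = (\<chi> i j. frechet_derivative g (at x) (axis i (axis j 1)))"

definition partial_deriv :: "'n \<Rightarrow> (real^'n \<Rightarrow> real) \<Rightarrow> (real^'n \<Rightarrow> real)" where
  "partial_deriv j g = (\<lambda>x. frechet_derivative g (at x) (axis j 1))"

fun iter_partial :: "'n list \<Rightarrow> (real^'n \<Rightarrow> real) \<Rightarrow> (real^'n \<Rightarrow> real)" where
  "iter_partial [] g = g"
| "iter_partial (j # js) g = partial_deriv j (iter_partial js g)"

definition smooth :: "(real^'n::finite \<Rightarrow> real) \<Rightarrow> bool" where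
  "smooth g \<longleftrightarrow> (\<forall>js. (\<forall>x. iter_partial js g differentiable (at x))
                        \<and> continuous_on UNIV (iter_partial js g))"

definition sepF :: "('m::finite \<Rightarrow> real^'n \<Rightarrow> real) \<Rightarrow> real^'n^'m \<Rightarrow> real" where
  "sepF f \<theta> = (\<Sum>i\<in>UNIV. f i (\<theta> $ i))"

end

theory Submission
  imports Defs
begin

lemma kron_linear: "linear (kron_apply A)"
  by (rule linearI) (simp_all add: kron_apply_def vec_eq_iff sum.distrib scaleR_add_right scaleR_sum_right mult_ac)

lemma kron_bl: "bounded_linear (kron_apply A)"
  using kron_linear linear_conv_bounded_linear by blast

lemma kron_mult: "kron_apply A (kron_apply B v) = kron_apply (A ** B) v"
proof -
  have "\<And>i. (\<Sum>j\<in>UNIV. A $ i $ j *\<^sub>R (\<Sum>k\<in>UNIV. B $ j $ k *\<^sub>R v $ k))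
     = (\<Sum>k\<in>UNIV. (\<Sum>j\<in>UNIV. A $ i $ j * B $ j $ k) *\<^sub>R v $ k)"
  proof -
    fix i
    have "(\<Sum>j\<in>UNIV. A $ i $ j *\<^sub>R (\<Sum>k\<in>UNIV. B $ j $ k *\<^sub>R v $ k))
       = (\<Sum>j\<in>UNIV. \<Sum>k\<in>UNIV. (A $ i $ j * B $ j $ k) *\<^sub>R v $ k)"
      by (simp only: scaleR_sum_right scaleR_scaleR)
    also have "\<dots> = (\<Sum>k\<in>UNIV. \<Sum>j\<in>UNIV. (A $ i $ j * B $ j $ k) *\<^sub>R v $ k)"
      by (rule sum.swap)
    also have "\<dots> = (\<Sum>k\<in>UNIV. (\<Sum>j\<in>UNIV. A $ i $ j * B $ j $ k) *\<^sub>R v $ k)"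
      by (simp only: scaleR_sum_left)
    finally show "?thesis i" .
  qed
  then show ?thesis by (simp add: kron_apply_def matrix_matrix_mult_def vec_eq_iff)
qed

lemma grad_Psi:
  fixes f :: "'m::finite \<Rightarrow> real^'n::finite \<Rightarrow> real"
  assumes diff: "\<And>i p. f i differentiable (at p)"
    and St: "transpose S = S"
  shows "grad_stack (\<lambda>y. sepF f (tz + kron_apply S y)) x
     = kron_apply S (\<chi> i. grad (f i) ((tz + kron_apply S x) $ i))"
proof -
  let ?t = "tz + kron_apply S x"
  define D where "D i = frechet_derivative (f i) (at (?t $ i))" for i
  have fd: "(f i has_derivative D i) (at (?t $ i))" for i
    unfolding D_def using diff frechet_derivative_works by blast
  have lin: "linear (D i)" for i using fd has_derivative_linear by blast
  have inner: "((\<lambda>y. (tz + kron_apply S y) $ i) has_derivative (\<lambda>h. kron_apply S h $ i)) (at x)" for i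
  proof -
    have "((\<lambda>y. tz + kron_apply S y) has_derivative (\<lambda>h. 0 + kron_apply S h)) (at x)"
      by (intro has_derivative_add has_derivative_const bounded_linear.has_derivative[OF kron_bl] has_derivative_ident)
    from bounded_linear.has_derivative[OF bounded_linear_vec_nth[of i] this]
    show ?thesis by simp
  qed
  have comp: "((\<lambda>y. f i ((tz + kron_apply S y) $ i)) has_derivative (\<lambda>h. D i (kron_apply S h $ i))) (at x)" for i
    using diff_chain_at[OF inner fd] by (simp add: o_def)
  have "((\<lambda>y. sepF f (tz + kron_apply S y)) has_derivative (\<lambda>h. \<Sum>i\<in>UNIV. D i (kron_apply S h $ i))) (at x)"
    unfolding sepF_def by (rule has_derivative_sum) (use comp in auto)
  then have FD: "frechet_derivative (\<lambda>y. sepF f (tz + kron_apply S y)) (at x)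
      = (\<lambda>h. \<Sum>i\<in>UNIV. D i (kron_apply S h $ i))"
    by (rule frechet_derivative_at[symmetric])
  have ax: "kron_apply S (axis i' (axis j' 1)) $ i = S $ i $ i' *\<^sub>R axis j' 1" for i i' and j' :: 'n
    by (simp add: kron_apply_def axis_def if_distrib cong: if_cong)
  have Dsc: "D i (c *\<^sub>R v) = c * D i v" for i c v
    using linear_scale[OF lin] by simp
  have gr: "grad (f i) (?t $ i) $ j = D i (axis j 1)" for i j
    by (simp add: grad_def D_def)
  have Ssym: "S $ i $ i' = S $ i' $ i" for i i'
    using St by (metis transpose_def vec_lambda_beta)
  have comp2: "(\<Sum>i\<in>UNIV. D i (kron_apply S (axis i' (axis j' 1)) $ i))
      = (kron_apply S (\<chi> i. grad (f i) (?t $ i))) $ i' $ j'" for i' j'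
  proof -
    have "(\<Sum>i\<in>UNIV. D i (kron_apply S (axis i' (axis j' 1)) $ i))
        = (\<Sum>i\<in>UNIV. S $ i' $ i * grad (f i) (?t $ i) $ j')"
      by (intro sum.cong refl) (simp only: ax Dsc gr Ssym)
    also have "\<dots> = (kron_apply S (\<chi> i. grad (f i) (?t $ i))) $ i' $ j'"
      by (simp add: kron_apply_def sum_component)
    finally show ?thesis .
  qed
  show ?thesis
    unfolding grad_stack_def FD by (simp add: vec_eq_iff comp2)
qed

theorem proposition4:
  fixes f :: "'m::finite \<Rightarrow> real^'n::finite \<Rightarrow> real"
    and E :: "'m \<Rightarrow> 'm \<Rightarrow> bool"
    and S :: "real^'m^'m"
    and r :: "real^'n"
    and \<alpha> :: real
    and \<theta>0 :: "real^'n^'m"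
    and noise :: "nat \<Rightarrow> real^'n^'m"
    and \<theta> x :: "nat \<Rightarrow> real^'n^'m"
  assumes m2: "CARD('m) \<ge> 2"
    and smooth: "\<forall>i. smooth (f i)"
    and E_sym: "\<forall>i j. E i j \<longrightarrow> E j i"
    and E_irrefl: "\<forall>i. \<not> E i i"
    and S_sqrt: "is_psd_sqrt S (laplacian E)"
    and alpha_pos: "\<alpha> > 0"
    and init: "block_sum \<theta>0 = r"
    and theta_0: "\<theta> 0 = \<theta>0"
    and theta_step: "\<forall>k. \<theta> (Suc k) = \<theta> k - \<alpha> *\<^sub>R
          (kron_apply (laplacian E) (\<chi> i. grad (f i) (\<theta> k $ i)) + kron_apply S (noise k))"
    and x_0: "x 0 = 0"
    and x_step: "\<forall>k. x (Suc k) = x k - \<alpha> *\<^sub>R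
          (grad_stack (\<lambda>y. sepF f (\<theta>0 + kron_apply S y)) (x k) + noise k)"
  shows "\<forall>k. \<theta> k = \<theta>0 + kron_apply S (x k)"
  proof
  fix k
  have diff: "\<And>i p. f i differentiable (at p)"
  proof -
    fix i p
    have "smooth (f i)" using smooth by blast
    then have "\<forall>x. iter_partial [] (f i) differentiable (at x)" unfolding smooth_def by blast
    then show "f i differentiable (at p)" by simp
  qed
  have St: "transpose S = S" and SS: "S ** S = laplacian E"
    using S_sqrt unfolding is_psd_sqrt_def by auto
  have K: "linear (kron_apply S)" by (rule kron_linear)
  show "\<theta> k = \<theta>0 + kron_apply S (x k)"
  proof (induction k)
    case 0 then show ?case using theta_0 x_0 linear_0[OF K] by simp
  next
    case (Suc k)
    have g: "kron_apply S (grad_stack (\<lambda>y. sepF f (\<theta>0 + kron_apply S y)) (x k))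
       = kron_apply (laplacian E) (\<chi> i. grad (f i) (\<theta> k $ i))"
      using grad_Psi[where f=f and S=S and tz=\<theta>0 and x="x k", OF diff St] Suc
      by (simp add: kron_mult SS)
    let ?G = "grad_stack (\<lambda>y. sepF f (\<theta>0 + kron_apply S y)) (x k)"
    have "\<theta>0 + kron_apply S (x (Suc k)) = \<theta>0 + kron_apply S (x k - \<alpha> *\<^sub>R (?G + noise k))"
      using x_step by simp
    also have "\<dots> = \<theta>0 + (kron_apply S (x k) - \<alpha> *\<^sub>R (kron_apply S ?G + kron_apply S (noise k)))"
      by (simp only: linear_diff[OF K] linear_scale[OF K] linear_add[OF K])
    also have "\<dots> = \<theta> k - \<alpha> *\<^sub>R (kron_apply (laplacian E) (\<chi> i. grad (f i) (\<theta> k $ i)) + kron_apply S (noise k))"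
      by (simp only: g Suc add_diff_eq)
    also have "\<dots> = \<theta> (Suc k)" using theta_step by simp
    finally show ?case by simp
  qed
qed

end
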